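(* Let $X$ be a Banach space over $\mathbb K\in\{\mathbb R,\mathbb C\}$, $(S,\Sigma,\mu)$ a measure space, and $f,g:S\to X$ strongly measurable functions such that for each $x^*\in X^*$ one has $|\langle g,x^*\rangle|\le|\langle f,x^*\rangle|$ $\mu$-a.e. Then there exists a $\Sigma$-measurable function $a:S\to\mathbb K$ with $\|a\|_\infty\le1$ and $g=af$ $\mu$-a.e. *)

theory Defs
  imports "HOL-Analysis.Analysis"
begin

definition strongly_measurable :: "'s measure \<Rightarrow> ('s \<Rightarrow> 'a::real_normed_vector) \<Rightarrow> bool" where
  "strongly_measurable M f \<longleftrightarrow>
     (\<exists>s::nat \<Rightarrow> 's \<Rightarrow> 'a. (\<forall>n. simple_function M (s n)) \<and>
        (\<forall>x\<in>space M. (\<lambda>n. s n x) \<longlonglongrightarrow> f x))"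

text \<open>A complex Banach space is encoded as a real Banach space (type class banach)
  together with a complex scalar multiplication extending the real one and
  compatible with the norm.\<close>
definition complex_scaling :: "(complex \<Rightarrow> 'a::real_normed_vector \<Rightarrow> 'a) \<Rightarrow> bool" where
  "complex_scaling cs \<longleftrightarrow>
     (\<forall>r x. cs (complex_of_real r) x = r *\<^sub>R x) \<and>
     (\<forall>a b x. cs (a * b) x = cs a (cs b x)) \<and>
     (\<forall>a b x. cs (a + b) x = cs a x + cs b x) \<and>
     (\<forall>a x y. cs a (x + y) = cs a x + cs a y) \<and>
     (\<forall>a x. norm (cs a x) = cmod a * norm x)"

definition complex_dual :: "(complex \<Rightarrow> 'a::real_normed_vector \<Rightarrow> 'a) \<Rightarrow> ('a \<Rightarrow> complex) \<Rightarrow> bool" where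
  "complex_dual cs \<phi> \<longleftrightarrow> bounded_linear \<phi> \<and> (\<forall>c x. \<phi> (cs c x) = c * \<phi> x)"

end

theory Submission
  imports Defs
begin


definition lingraph :: "('a::real_normed_vector \<times> real) set \<Rightarrow> bool" where
  "lingraph G \<longleftrightarrow> (\<forall>x r y s a b. (x,r)\<in>G \<longrightarrow> (y,s)\<in>G \<longrightarrow> (a *\<^sub>R x + b *\<^sub>R y, a*r + b * s) \<in> G)
     \<and> (\<forall>x r. (x,r)\<in>G \<longrightarrow> r \<le> norm x)"

lemma lingraph_comb: "lingraph G \<Longrightarrow> (x,r)\<in>G \<Longrightarrow> (y,s)\<in>G \<Longrightarrow> (a *\<^sub>R x + b *\<^sub>R y, a*r + b * s) \<in> G"
  unfolding lingraph_def by blast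

lemma lingraph_le: "lingraph G \<Longrightarrow> (x,r)\<in>G \<Longrightarrow> r \<le> norm x"
  unfolding lingraph_def by blast

lemma lingraph_scale: "lingraph G \<Longrightarrow> (x,r)\<in>G \<Longrightarrow> (a *\<^sub>R x, a*r) \<in> G"
  using lingraph_comb[of G x r x r a 0] by simp

lemma lingraph_add: "lingraph G \<Longrightarrow> (x,r)\<in>G \<Longrightarrow> (y,s)\<in>G \<Longrightarrow> (x + y, r + s) \<in> G"
  using lingraph_comb[of G x r y s 1 1] by simp

lemma lingraph_unique: assumes "lingraph G" "(x,r)\<in>G" "(x,s)\<in>G" shows "r = s"
proof -
  have "(x - x, r - s) \<in> G" using lingraph_comb[OF assms, of 1 "-1"] by simp
  hence 1: "r - s \<le> 0" using lingraph_le[OF assms(1)] by fastforce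
  have "(x - x, s - r) \<in> G" using lingraph_comb[OF assms(1) assms(3) assms(2), of 1 "-1"] by simp
  hence "s - r \<le> 0" using lingraph_le[OF assms(1)] by fastforce
  with 1 show ?thesis by simp
qed

lemma lingraph_extend:
  assumes G: "lingraph G" and ne: "(x0,r0) \<in> G"
  shows "\<exists>c. lingraph {(x + t *\<^sub>R v, r + t*c) | x r t. (x,r)\<in>G}"
proof -
  define S where "S = {s - norm (y - v) | y s. (y,s)\<in>G}"
  define c where "c = Sup S"
  have z: "(0,0) \<in> G" using lingraph_scale[OF G ne, of 0] by simp
  have ub: "s - norm (y - v) \<le> norm (x + v) - r" if "(x,r)\<in>G" "(y,s)\<in>G" for x r y s
  proof -
    have "r + s \<le> norm (x + y)" using lingraph_le[OF G lingraph_add[OF G that]] .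
    also have "x + y = (x + v) + (y - v)" by simp
    also have "norm \<dots> \<le> norm (x + v) + norm (y - v)" by (rule norm_triangle_ineq)
    finally show ?thesis by simp
  qed
  have Sne: "S \<noteq> {}" using z unfolding S_def by blast
  have bdd: "bdd_above S" unfolding S_def bdd_above_def using ub[OF z] by blast
  have c_ge: "s - norm (y - v) \<le> c" if "(y,s)\<in>G" for y s
    unfolding c_def by (rule cSup_upper[OF _ bdd]) (use that S_def in blast)
  have c_le: "c \<le> norm (x + v) - r" if "(x,r)\<in>G" for x r
    unfolding c_def by (rule cSup_least[OF Sne]) (use that ub S_def in blast)
  have dom: "r + t*c \<le> norm (x + t *\<^sub>R v)" if "(x,r)\<in>G" for x r t
  proof (cases "t = 0")
    case True then show ?thesis using lingraph_le[OF G that] by simp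
  next
    case False
    show ?thesis
    proof (cases "t > 0")
      case True
      have "((1/t) *\<^sub>R x, (1/t)*r) \<in> G" by (rule lingraph_scale[OF G that])
      from c_le[OF this] have "c \<le> norm ((1/t) *\<^sub>R x + v) - r/t" by simp
      hence "t*c \<le> t * norm ((1/t) *\<^sub>R x + v) - r" using True by (simp add: field_simps)
      also have "t * norm ((1/t) *\<^sub>R x + v) = norm (t *\<^sub>R ((1/t) *\<^sub>R x + v))" using True by simp
      also have "t *\<^sub>R ((1/t) *\<^sub>R x + v) = x + t *\<^sub>R v" using True by (simp add: algebra_simps)
      finally show ?thesis by simp
    next
      case False
      hence tn: "t < 0" using \<open>t \<noteq> 0\<close> by simp
      have "((-1/t) *\<^sub>R x, (-1/t)*r) \<in> G" by (rule lingraph_scale[OF G that])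
      from c_ge[OF this] have "-r/t - norm ((-1/t) *\<^sub>R x - v) \<le> c" by simp
      hence "r - (-t) * norm ((-1/t) *\<^sub>R x - v) \<le> -t*c" using tn by (simp add: field_simps)
      also have "(-t) * norm ((-1/t) *\<^sub>R x - v) = norm ((-t) *\<^sub>R ((-1/t) *\<^sub>R x - v))" using tn by simp
      also have "(-t) *\<^sub>R ((-1/t) *\<^sub>R x - v) = x + t *\<^sub>R v" using tn by (simp add: algebra_simps)
      finally show ?thesis by simp
    qed
  qed
  have "lingraph {(x + t *\<^sub>R v, r + t*c) | x r t. (x,r)\<in>G}"
    unfolding lingraph_def
  proof (intro conjI allI impI)
    fix x r y s a b
    assume "(x,r) \<in> {(x + t *\<^sub>R v, r + t*c) | x r t. (x,r)\<in>G}"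
      "(y,s) \<in> {(x + t *\<^sub>R v, r + t*c) | x r t. (x,r)\<in>G}"
    then obtain x1 r1 t1 x2 r2 t2 where h: "(x1,r1)\<in>G" "(x2,r2)\<in>G"
      "x = x1 + t1 *\<^sub>R v" "r = r1 + t1*c" "y = x2 + t2 *\<^sub>R v" "s = r2 + t2*c" by blast
    have "(a *\<^sub>R x1 + b *\<^sub>R x2, a*r1 + b*r2) \<in> G" by (rule lingraph_comb[OF G h(1,2)])
    moreover have "a *\<^sub>R x + b *\<^sub>R y = (a *\<^sub>R x1 + b *\<^sub>R x2) + (a*t1 + b*t2) *\<^sub>R v"
      using h by (simp add: algebra_simps)
    moreover have "a*r + b * s = (a*r1 + b*r2) + (a*t1 + b*t2)*c"
      using h by (simp add: algebra_simps)
    ultimately show "(a *\<^sub>R x + b *\<^sub>R y, a*r + b * s) \<in> {(x + t *\<^sub>R v, r + t*c) | x r t. (x,r)\<in>G}"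
      by blast
  next
    fix x r
    assume "(x,r) \<in> {(x + t *\<^sub>R v, r + t*c) | x r t. (x,r)\<in>G}"
    then show "r \<le> norm x" using dom by blast
  qed
  then show ?thesis by blast
qed

lemma hahn_banach_graph:
  fixes G0 :: "('a::real_normed_vector \<times> real) set"
  assumes G0: "lingraph G0" and ne: "(x0,r0) \<in> G0"
  shows "\<exists>\<psi>. linear \<psi> \<and> (\<forall>x. \<bar>\<psi> x\<bar> \<le> norm x) \<and> (\<forall>x r. (x,r)\<in>G0 \<longrightarrow> \<psi> x = r)"
proof -
  define A where "A = {G. lingraph G \<and> G0 \<subseteq> G}"
  have "\<exists>M\<in>A. \<forall>X\<in>A. M \<subseteq> X \<longrightarrow> X = M"
  proof (rule subset_Zorn)
    fix C assume C: "subset.chain A C"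
    show "\<exists>U\<in>A. \<forall>X\<in>C. X \<subseteq> U"
    proof (cases "C = {}")
      case True then show ?thesis using G0 unfolding A_def by blast
    next
      case False
      have CA: "C \<subseteq> A" and tot: "\<forall>X\<in>C. \<forall>Y\<in>C. X \<subseteq> Y \<or> Y \<subseteq> X"
        using C by (auto simp: subset_chain_def)
      have "lingraph (\<Union>C)" unfolding lingraph_def
      proof (intro conjI allI impI)
        fix x r y s a b assume "(x,r) \<in> \<Union>C" "(y,s) \<in> \<Union>C"
        then obtain X Y where XY: "X\<in>C" "Y\<in>C" "(x,r)\<in>X" "(y,s)\<in>Y" by blast
        have "lingraph X" "lingraph Y" using XY CA A_def by auto
        then show "(a *\<^sub>R x + b *\<^sub>R y, a*r + b * s) \<in> \<Union>C"
          using tot XY lingraph_comb by (metis UnionI subsetD)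
      next
        fix x r assume "(x,r) \<in> \<Union>C"
        then obtain X where "X\<in>C" "(x,r)\<in>X" by blast
        then show "r \<le> norm x" using CA A_def lingraph_le by blast
      qed
      moreover have "G0 \<subseteq> \<Union>C" using False CA A_def by blast
      ultimately show ?thesis unfolding A_def by blast
    qed
  qed
  then obtain M where MA: "M \<in> A" and max: "\<forall>X\<in>A. M \<subseteq> X \<longrightarrow> X = M" by blast
  have M: "lingraph M" and G0M: "G0 \<subseteq> M" using MA A_def by auto
  have tot: "\<exists>r. (v,r)\<in>M" for v
  proof (rule ccontr)
    assume nv: "\<nexists>r. (v,r)\<in>M"
    obtain c where c: "lingraph {(x + t *\<^sub>R v, r + t*c) | x r t. (x,r)\<in>M}"
      using lingraph_extend[OF M] ne G0M by blast
    let ?G = "{(x + t *\<^sub>R v, r + t*c) | x r t. (x,r)\<in>M}"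
    have "M \<subseteq> ?G"
    proof
      fix p assume "p \<in> M" then obtain x r where "p = (x,r)" "(x,r)\<in>M" by (cases p) auto
      then show "p \<in> ?G" by (intro CollectI exI[of _ x] exI[of _ r] exI[of _ 0]) simp
    qed
    have GA: "?G \<in> A" unfolding A_def
      by (rule CollectI, rule conjI[OF c subset_trans[OF G0M \<open>M \<subseteq> ?G\<close>]])
    have "?G = M" using bspec[OF max GA] \<open>M \<subseteq> ?G\<close> by (rule mp)
    moreover have "(v, c) \<in> ?G"
      using lingraph_scale[OF M subsetD[OF G0M ne], of 0]
      by (intro CollectI exI[of _ 0] exI[of _ 0] exI[of _ 1]) simp
    ultimately show False using nv by blast
  qed
  define \<psi> where "\<psi> x = (THE r. (x,r)\<in>M)" for x
  have psi: "(x, \<psi> x) \<in> M" for x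
    unfolding \<psi>_def using tot[of x] lingraph_unique[OF M] by (metis theI)
  have psi_eq: "(x,r)\<in>M \<Longrightarrow> \<psi> x = r" for x r using lingraph_unique[OF M psi] by blast
  have lin: "linear \<psi>"
  proof (rule linearI)
    fix x y show "\<psi> (x + y) = \<psi> x + \<psi> y" by (rule psi_eq, rule lingraph_add[OF M psi psi])
  next
    fix a x show "\<psi> (a *\<^sub>R x) = a *\<^sub>R \<psi> x" using psi_eq[OF lingraph_scale[OF M psi]] by simp
  qed
  have "\<bar>\<psi> x\<bar> \<le> norm x" for x
  proof -
    have "\<psi> x \<le> norm x" using lingraph_le[OF M psi] .
    moreover have "\<psi> (-x) \<le> norm (-x)" using lingraph_le[OF M psi] .
    moreover have "\<psi> (-x) = - \<psi> x" using linear_neg[OF lin] .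
    ultimately show ?thesis by simp
  qed
  then show ?thesis using lin psi_eq G0M by blast
qed



lemma hb_subspace:
  fixes L :: "'a::real_normed_vector set"
  assumes L0: "0 \<in> L" and L: "\<And>x y a b. x\<in>L \<Longrightarrow> y\<in>L \<Longrightarrow> a *\<^sub>R x + b *\<^sub>R y \<in> L"
  shows "\<exists>\<psi>. linear \<psi> \<and> (\<forall>x. \<bar>\<psi> x\<bar> \<le> norm x) \<and> (\<forall>w\<in>L. \<psi> w = 0) \<and>
           \<psi> v = Inf ((\<lambda>w. norm (v - w)) ` L)"
proof -
  define d where "d = Inf ((\<lambda>w. norm (v - w)) ` L)"
  have ne: "(\<lambda>w. norm (v - w)) ` L \<noteq> {}" using L0 by blast
  have bdd: "bdd_below ((\<lambda>w. norm (v - w)) ` L)" by (rule bdd_belowI[of _ 0]) auto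
  have d0: "d \<ge> 0" unfolding d_def by (rule cInf_greatest[OF ne]) auto
  have dle: "d \<le> norm (v - w)" if "w\<in>L" for w
    unfolding d_def by (rule cInf_lower[OF _ bdd]) (use that in blast)
  define G where "G = {(w + t *\<^sub>R v, t * d) | w t. w \<in> L}"
  have "lingraph G" unfolding lingraph_def
  proof (intro conjI allI impI)
    fix x r y s a b assume "(x,r)\<in>G" "(y,s)\<in>G"
    then obtain w1 t1 w2 t2 where h: "w1\<in>L" "w2\<in>L" "x = w1 + t1 *\<^sub>R v" "r = t1*d"
      "y = w2 + t2 *\<^sub>R v" "s = t2 * d" unfolding G_def by blast
    have "a *\<^sub>R w1 + b *\<^sub>R w2 \<in> L" using L h by blast
    moreover have "a *\<^sub>R x + b *\<^sub>R y = (a *\<^sub>R w1 + b *\<^sub>R w2) + (a*t1 + b*t2) *\<^sub>R v"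
      using h by (simp add: algebra_simps)
    moreover have "a*r + b * s = (a*t1+b*t2)*d" using h by (simp add: algebra_simps)
    ultimately show "(a *\<^sub>R x + b *\<^sub>R y, a*r + b * s) \<in> G" unfolding G_def by blast
  next
    fix x r assume "(x,r)\<in>G"
    then obtain w t where h: "w\<in>L" "x = w + t *\<^sub>R v" "r = t*d" unfolding G_def by blast
    show "r \<le> norm x"
    proof (cases "t > 0")
      case True
      have "(-1/t) *\<^sub>R w + 0 *\<^sub>R w \<in> L" using L h(1) by blast
      hence "d \<le> norm (v - ((-1/t) *\<^sub>R w + 0 *\<^sub>R w))" by (rule dle)
      hence "d \<le> norm (v - (-1/t) *\<^sub>R w)" by (simp only: scaleR_zero_left add.right_neutral)
      hence "t*d \<le> t * norm (v - (-1/t) *\<^sub>R w)" using True by (simp add: mult_left_mono)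
      also have "t * norm (v - (-1/t) *\<^sub>R w) = norm (t *\<^sub>R (v - (-1/t) *\<^sub>R w))" using True by simp
      also have "t *\<^sub>R (v - (-1/t) *\<^sub>R w) = x" using True h by (simp add: algebra_simps)
      finally show ?thesis using h by simp
    next
      case False
      hence "t*d \<le> 0" using d0 by (simp add: mult_nonpos_nonneg)
      then show ?thesis using h(3) norm_ge_zero[of x] by linarith
    qed
  qed
  moreover have "(0 + 0 *\<^sub>R v, 0 * d) \<in> G" unfolding G_def using L0 by blast
  ultimately obtain \<psi> where \<psi>: "linear \<psi>" "\<forall>x. \<bar>\<psi> x\<bar> \<le> norm x" "\<forall>x r. (x,r)\<in>G \<longrightarrow> \<psi> x = r"
    using hahn_banach_graph by blast
  have "\<psi> w = 0" if "w\<in>L" for w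
  proof -
    have "(w + 0 *\<^sub>R v, 0 * d) \<in> G" unfolding G_def using that by blast
    then show ?thesis using \<psi>(3) by simp
  qed
  moreover have "\<psi> v = d"
  proof -
    have "(0 + 1 *\<^sub>R v, 1 * d) \<in> G" unfolding G_def using L0 by blast
    then show ?thesis using \<psi>(3) by simp
  qed
  ultimately show ?thesis using \<psi> unfolding d_def by blast
qed

lemma hb_subspace_approx:
  fixes L :: "'a::real_normed_vector set"
  assumes L0: "0 \<in> L" and L: "\<And>x y a b. x\<in>L \<Longrightarrow> y\<in>L \<Longrightarrow> a *\<^sub>R x + b *\<^sub>R y \<in> L"
    and e: "e > 0"
  shows "\<exists>\<psi>. linear \<psi> \<and> (\<forall>x. \<bar>\<psi> x\<bar> \<le> norm x) \<and> (\<forall>w\<in>L. \<psi> w = 0) \<and>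
           \<psi> v \<ge> 0 \<and> (\<exists>w\<in>L. norm (v - w) \<le> \<psi> v + e)"
proof -
  obtain \<psi> where \<psi>: "linear \<psi>" "\<forall>x. \<bar>\<psi> x\<bar> \<le> norm x" "\<forall>w\<in>L. \<psi> w = 0"
    "\<psi> v = Inf ((\<lambda>w. norm (v - w)) ` L)"
    using hb_subspace[OF L0 L] by blast
  have ne: "(\<lambda>w. norm (v - w)) ` L \<noteq> {}" using L0 by blast
  have bdd: "bdd_below ((\<lambda>w. norm (v - w)) ` L)" by (rule bdd_belowI[of _ 0]) auto
  have "\<psi> v \<ge> 0" unfolding \<psi>(4) by (rule cInf_greatest[OF ne]) auto
  moreover have "Inf ((\<lambda>w. norm (v - w)) ` L) < \<psi> v + e" using \<psi>(4) e by simp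
  then obtain w where "w\<in>L" "norm (v - w) < \<psi> v + e"
    using cInf_less_iff[OF ne bdd] by blast
  moreover have "\<exists>w\<in>L. norm (v - w) \<le> \<psi> v + e" using \<open>w\<in>L\<close> \<open>norm (v - w) < \<psi> v + e\<close>
    by (intro bexI[of _ w]) auto
  ultimately show ?thesis using \<psi> by (intro exI[of _ \<psi>]) auto
qed

lemma linear_bounded_linear:
  fixes \<psi> :: "'a::real_normed_vector \<Rightarrow> real"
  assumes "linear \<psi>" "\<forall>x. \<bar>\<psi> x\<bar> \<le> norm x"
  shows "bounded_linear \<psi>"
  by (rule bounded_linear_intro[where K=1, OF linear_add[OF assms(1)] linear_scale[OF assms(1)]])
     (use assms(2) in simp)

lemma real_fun:
  fixes u v :: "'a::real_normed_vector"
  assumes e: "e > 0"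
  shows "\<exists>\<psi>. bounded_linear \<psi> \<and> (\<forall>x. \<bar>\<psi> x\<bar> \<le> norm x) \<and> \<psi> u = 0 \<and>
            (\<exists>t. norm (v - t *\<^sub>R u) \<le> \<bar>\<psi> v\<bar> + e)"
proof -
  have L: "a *\<^sub>R x + b *\<^sub>R y \<in> range (\<lambda>t. t *\<^sub>R u)" if hx: "x \<in> range (\<lambda>t. t *\<^sub>R u)" and hy: "y \<in> range (\<lambda>t. t *\<^sub>R u)" for x y a b
  proof -
    obtain t1 t2 where "x = t1 *\<^sub>R u" "y = t2 *\<^sub>R u" using hx hy by blast
    then have "a *\<^sub>R x + b *\<^sub>R y = (a*t1 + b*t2) *\<^sub>R u" by (simp add: algebra_simps)
    then show ?thesis by blast
  qed
  have L0: "0 \<in> range (\<lambda>t. t *\<^sub>R u)" by (rule range_eqI[of _ _ 0]) simp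
  obtain \<psi> where \<psi>: "linear \<psi>" "\<forall>x. \<bar>\<psi> x\<bar> \<le> norm x" "\<forall>w\<in>range (\<lambda>t. t *\<^sub>R u). \<psi> w = 0"
    "\<psi> v \<ge> 0" "\<exists>w\<in>range (\<lambda>t. t *\<^sub>R u). norm (v - w) \<le> \<psi> v + e"
    using hb_subspace_approx[OF L0 L e, of v] by blast
  have "\<psi> u = 0" using \<psi>(3) by (metis rangeI scaleR_one)
  moreover obtain t where "norm (v - t *\<^sub>R u) \<le> \<psi> v + e" using \<psi>(5) by blast
  ultimately show ?thesis using \<psi> linear_bounded_linear[OF \<psi>(1,2)] by (intro exI[of _ \<psi>]) auto
qed

lemma cs_facts:
  assumes "complex_scaling cs"
  shows cs_real: "cs (complex_of_real r) x = r *\<^sub>R x"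
    and cs_mult: "cs (a * b) x = cs a (cs b x)"
    and cs_addl: "cs (a + b) x = cs a x + cs b x"
    and cs_addr: "cs a (x + y) = cs a x + cs a y"
    and cs_norm: "norm (cs a x) = cmod a * norm x"
  using assms unfolding complex_scaling_def by blast+

lemma cs_one: "complex_scaling cs \<Longrightarrow> cs 1 x = x"
  using cs_real[of cs 1 x] by simp

lemma cs_zero: "complex_scaling cs \<Longrightarrow> cs a 0 = 0"
  using cs_norm[of cs a 0] by simp

lemma cs_zero_left: "complex_scaling cs \<Longrightarrow> cs 0 x = 0"
  using cs_norm[of cs 0 x] by simp

lemma cs_diffr: "complex_scaling cs \<Longrightarrow> cs a (x - y) = cs a x - cs a y"
  using cs_addr[of cs a "x - y" y] by (simp add: algebra_simps)

lemma cs_diffl: "complex_scaling cs \<Longrightarrow> cs (a - b) x = cs a x - cs b x"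
  using cs_addl[of cs "a - b" b x] by (simp add: algebra_simps)

lemma cs_scaleR: "complex_scaling cs \<Longrightarrow> cs a (r *\<^sub>R x) = r *\<^sub>R cs a x"
  using cs_mult[of cs a "complex_of_real r" x] cs_mult[of cs "complex_of_real r" a x] cs_real[of cs r]
  by (simp add: mult.commute)

lemma cs_decomp: "complex_scaling cs \<Longrightarrow> cs c x = Re c *\<^sub>R x + Im c *\<^sub>R cs \<i> x"
proof -
  assume cs: "complex_scaling cs"
  have "c = complex_of_real (Re c) + complex_of_real (Im c) * \<i>" by (simp add: complex_eq_iff)
  then have "cs c x = cs (complex_of_real (Re c) + complex_of_real (Im c) * \<i>) x" by simp
  also have "\<dots> = Re c *\<^sub>R x + Im c *\<^sub>R cs \<i> x"
    using cs by (simp add: cs_addl cs_mult cs_real)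
  finally show ?thesis .
qed

lemma complex_fun:
  fixes u v :: "'a::real_normed_vector"
  assumes cs: "complex_scaling cs" and e: "e > 0"
  shows "\<exists>\<phi>. complex_dual cs \<phi> \<and> (\<forall>x. cmod (\<phi> x) \<le> norm x) \<and> \<phi> u = 0 \<and>
            (\<exists>t. norm (v - cs t u) \<le> cmod (\<phi> v) + e)"
proof -
  let ?L = "range (\<lambda>c. cs c u)"
  have L: "a *\<^sub>R x + b *\<^sub>R y \<in> ?L" if hx: "x \<in> ?L" and hy: "y \<in> ?L" for x y a b
  proof -
    obtain t1 t2 where "x = cs t1 u" "y = cs t2 u" using hx hy by blast
    then have "a *\<^sub>R x + b *\<^sub>R y = cs (complex_of_real a * t1 + complex_of_real b * t2) u"
      using cs by (simp add: cs_addl cs_mult cs_real)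
    then show ?thesis by blast
  qed
  have L0: "0 \<in> ?L" by (rule range_eqI[of _ _ 0]) (simp add: cs_zero_left[OF cs])
  obtain \<psi> where \<psi>: "linear \<psi>" "\<forall>x. \<bar>\<psi> x\<bar> \<le> norm x" "\<forall>w\<in>?L. \<psi> w = 0"
    "\<psi> v \<ge> 0" "\<exists>w\<in>?L. norm (v - w) \<le> \<psi> v + e"
    using hb_subspace_approx[OF L0 L e, of v] by blast
  define \<phi> where "\<phi> x = Complex (\<psi> x) (- \<psi> (cs \<i> x))" for x
  have padd: "\<psi> (x + y) = \<psi> x + \<psi> y" for x y using linear_add[OF \<psi>(1)] .
  have pscale: "\<psi> (r *\<^sub>R x) = r * \<psi> x" for r x using linear_scale[OF \<psi>(1)] by simp
  have hom: "\<phi> (cs c x) = c * \<phi> x" for c x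
  proof -
    have 1: "cs c x = Re c *\<^sub>R x + Im c *\<^sub>R cs \<i> x" by (rule cs_decomp[OF cs])
    have "cs \<i> (cs c x) = cs (\<i> * c) x" by (simp add: cs_mult[OF cs])
    also have "\<dots> = (- Im c) *\<^sub>R x + Re c *\<^sub>R cs \<i> x" by (subst cs_decomp[OF cs]) simp
    finally have 2: "cs \<i> (cs c x) = (- Im c) *\<^sub>R x + Re c *\<^sub>R cs \<i> x" .
    have a: "\<psi> (cs c x) = Re c * \<psi> x + Im c * \<psi> (cs \<i> x)" unfolding 1 by (simp add: padd pscale)
    have b: "\<psi> (cs \<i> (cs c x)) = - Im c * \<psi> x + Re c * \<psi> (cs \<i> x)" unfolding 2 by (simp add: padd pscale linear_diff[OF \<psi>(1)])
    show ?thesis unfolding \<phi>_def a b by (simp add: complex_eq_iff algebra_simps)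
  qed
  have add: "\<phi> (x + y) = \<phi> x + \<phi> y" for x y
    unfolding \<phi>_def by (simp add: cs_addr[OF cs] padd complex_eq_iff)
  have scal: "\<phi> (r *\<^sub>R x) = r *\<^sub>R \<phi> x" for r x
    unfolding \<phi>_def by (simp add: cs_scaleR[OF cs] pscale complex_eq_iff scaleR_conv_of_real)
  have bnd: "cmod (\<phi> x) \<le> norm x" for x
  proof (cases "\<phi> x = 0")
    case True then show ?thesis by simp
  next
    case False
    define c where "c = cnj (\<phi> x) / complex_of_real (cmod (\<phi> x))"
    have cz: "c * \<phi> x = complex_of_real (cmod (\<phi> x))"
    proof -
      have h: "cnj (\<phi> x) * \<phi> x = complex_of_real (cmod (\<phi> x)) * complex_of_real (cmod (\<phi> x))"
        using complex_norm_square[of "\<phi> x"] by (simp add: power2_eq_square mult.commute)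
      have nz: "complex_of_real (cmod (\<phi> x)) \<noteq> 0" using False by simp
      show ?thesis unfolding c_def using h nz by (simp add: field_simps)
    qed
    have cm: "cmod c = 1" unfolding c_def using False by (simp add: norm_divide)
    have "cmod (\<phi> x) = Re (\<phi> (cs c x))" using hom[of c x] cz by simp
    also have "\<dots> = \<psi> (cs c x)" unfolding \<phi>_def by simp
    also have "\<dots> \<le> norm (cs c x)" using \<psi>(2) by (meson abs_le_D1)
    also have "\<dots> = norm x" using cm by (simp add: cs_norm[OF cs])
    finally show ?thesis .
  qed
  have bl: "bounded_linear \<phi>"
    by (rule bounded_linear_intro[where K=1]) (use add scal bnd in auto)
  have "\<phi> u = 0"
  proof -
    have "\<psi> u = 0" using \<psi>(3) cs_one[OF cs] by (metis rangeI)
    moreover have "\<psi> (cs \<i> u) = 0" using \<psi>(3) by blast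
    ultimately show ?thesis unfolding \<phi>_def by (simp add: complex_eq_iff)
  qed
  moreover obtain t where "norm (v - cs t u) \<le> \<psi> v + e" using \<psi>(5) by blast
  moreover have "\<psi> v \<le> cmod (\<phi> v)" using abs_Re_le_cmod[of "\<phi> v"] unfolding \<phi>_def by simp
  ultimately have "norm (v - cs t u) \<le> cmod (\<phi> v) + e" "\<phi> u = 0" by linarith+
  then show ?thesis using bl hom bnd unfolding complex_dual_def
    by (intro exI[of _ \<phi>]) blast
qed



lemma pointwise:
  fixes sc :: "'k::{real_normed_field,heine_borel} \<Rightarrow> 'a::real_normed_vector \<Rightarrow> 'a"
    and \<Phi> :: "('a \<Rightarrow> 'k) set" and D :: "'a set"
  assumes sc_norm: "\<And>c x. norm (sc c x) = norm c * norm x"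
    and sc_diff: "\<And>c x y. sc c x - sc c y = sc c (x - y)"
    and sc_sub: "\<And>a b x. sc a x - sc b x = sc (a - b) x"
    and lip: "\<And>\<phi> x y. \<phi>\<in>\<Phi> \<Longrightarrow> norm (\<phi> x - \<phi> y) \<le> norm (x - y)"
    and hom: "\<And>\<phi> c x. \<phi>\<in>\<Phi> \<Longrightarrow> \<phi> (sc c x) = c * \<phi> x"
    and ex: "\<And>u v e. u\<in>D \<Longrightarrow> v\<in>D \<Longrightarrow> e>0 \<Longrightarrow>
               \<exists>\<phi>\<in>\<Phi>. \<phi> u = 0 \<and> (\<exists>t. norm (v - sc t u) \<le> norm (\<phi> v) + e)"
    and D0: "0 \<in> D"
    and U: "\<And>n. U n \<in> D" "U \<longlonglongrightarrow> y1" and V: "\<And>n. V n \<in> D" "V \<longlonglongrightarrow> y2"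
    and H: "\<And>\<phi>. \<phi>\<in>\<Phi> \<Longrightarrow> norm (\<phi> y2) \<le> norm (\<phi> y1)"
  shows "\<exists>t. norm t \<le> 1 \<and> y2 = sc t y1"
proof -
  have sc0: "sc c 0 = 0" for c using sc_norm[of c 0] by simp
  have sc0': "sc 0 x = 0" for x using sc_norm[of 0 x] by simp
  have phi0: "\<phi> 0 = 0" if "\<phi>\<in>\<Phi>" for \<phi> using hom[OF that, of 0 0] sc0' by simp
  have lip': "norm (\<phi> x) \<le> norm (\<phi> y) + norm (x - y)" if "\<phi>\<in>\<Phi>" for \<phi> x y
    using lip[OF that, of x y] norm_triangle_ineq2[of "\<phi> x" "\<phi> y"] by linarith
  define e where "e n = inverse (real (Suc n))" for n
  have e_pos: "e n > 0" for n unfolding e_def by simp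
  have e0: "e \<longlonglongrightarrow> 0" unfolding e_def by (rule LIMSEQ_inverse_real_of_nat)
  have nU: "(\<lambda>n. norm (U n - y1)) \<longlonglongrightarrow> 0"
    using tendsto_norm[OF tendsto_diff[OF U(2) tendsto_const[of y1]]] by simp
  have nV: "(\<lambda>n. norm (V n - y2)) \<longlonglongrightarrow> 0"
    using tendsto_norm[OF tendsto_diff[OF V(2) tendsto_const[of y2]]] by simp
  have norming: "\<exists>Q. \<forall>n. Q n \<in> \<Phi> \<and> norm (W n) \<le> norm (Q n (W n)) + e n"
    if W: "\<forall>n. W n \<in> D" for W
  proof -
    have "\<forall>n. \<exists>\<phi>. \<phi> \<in> \<Phi> \<and> norm (W n) \<le> norm (\<phi> (W n)) + e n"
    proof
      fix n
      obtain \<phi> t where "\<phi>\<in>\<Phi>" "norm (W n - sc t 0) \<le> norm (\<phi> (W n)) + e n"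
        using ex[OF D0 W[rule_format] e_pos] by blast
      then show "\<exists>\<phi>. \<phi> \<in> \<Phi> \<and> norm (W n) \<le> norm (\<phi> (W n)) + e n" using sc0 by auto
    qed
    then show ?thesis by (rule choice)
  qed
  show ?thesis
  proof (cases "y1 = 0")
    case True
    obtain Q where Q0: "\<forall>n. Q n \<in> \<Phi> \<and> norm (V n) \<le> norm (Q n (V n)) + e n"
      using norming[of V] V(1) by blast
    hence Q: "\<And>n. Q n \<in> \<Phi>" "\<And>n. norm (V n) \<le> norm (Q n (V n)) + e n" by auto
    have Vle: "norm (V n) \<le> norm (V n - y2) + e n" for n
    proof -
      have "norm (Q n (V n)) \<le> norm (Q n y2) + norm (V n - y2)" by (rule lip'[OF Q(1)])
      also have "norm (Q n y2) \<le> norm (Q n y1)" by (rule H[OF Q(1)])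
      also have "Q n y1 = 0" using True phi0[OF Q(1)] by simp
      finally show ?thesis using Q(2)[of n] by simp
    qed
    have lim: "(\<lambda>n. norm (V n - y2) + e n) \<longlonglongrightarrow> 0"
      using tendsto_add[OF nV e0] by simp
    have "V \<longlonglongrightarrow> 0"
      by (rule Lim_null_comparison[OF always_eventually lim]) (use Vle in blast)
    from LIMSEQ_unique[OF V(2) this] have "y2 = 0" .
    then show ?thesis using sc0' by (intro exI[of _ 0]) simp
  next
    case False
    hence ny1: "norm y1 > 0" by simp
    have "\<forall>n. \<exists>\<phi> t. \<phi>\<in>\<Phi> \<and> \<phi> (U n) = 0 \<and> norm (V n - sc t (U n)) \<le> norm (\<phi> (V n)) + e n"
      using ex[OF U(1) V(1) e_pos] by blast
    from choice[OF this] obtain P where P: "\<forall>n. \<exists>t. P n\<in>\<Phi> \<and> P n (U n) = 0 \<and> norm (V n - sc t (U n)) \<le> norm (P n (V n)) + e n"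
      by blast
    from choice[OF P] obtain T where T: "\<forall>n. P n\<in>\<Phi> \<and> P n (U n) = 0 \<and> norm (V n - sc (T n) (U n)) \<le> norm (P n (V n)) + e n"
      by blast
    hence PT: "\<And>n. P n \<in> \<Phi>" "\<And>n. P n (U n) = 0"
      "\<And>n. norm (V n - sc (T n) (U n)) \<le> norm (P n (V n)) + e n"
      by auto
    define \<epsilon> where "\<epsilon> n = norm (U n - y1) + norm (V n - y2) + e n" for n
    have eps0: "\<epsilon> \<longlonglongrightarrow> 0" unfolding \<epsilon>_def using tendsto_add[OF tendsto_add[OF nU nV] e0] by simp
    have est: "norm (V n - sc (T n) (U n)) \<le> \<epsilon> n" for n
    proof -
      have "norm (P n (V n)) \<le> norm (P n y2) + norm (V n - y2)" by (rule lip'[OF PT(1)])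
      also have "norm (P n y2) \<le> norm (P n y1)" by (rule H[OF PT(1)])
      also have "norm (P n y1) \<le> norm (P n (U n)) + norm (y1 - U n)" by (rule lip'[OF PT(1)])
      finally have "norm (P n (V n)) \<le> norm (U n - y1) + norm (V n - y2)"
        using PT(2)[of n] by (simp add: norm_minus_commute)
      then show ?thesis using PT(3)[of n] unfolding \<epsilon>_def by simp
    qed
    have ev1: "eventually (\<lambda>n. norm (U n) > norm y1 / 2) sequentially"
      by (rule order_tendstoD(1)[OF tendsto_norm[OF U(2)]]) (use ny1 in simp)
    have ev2: "eventually (\<lambda>n. norm (V n) < norm y2 + 1) sequentially"
      using order_tendstoD(2)[OF tendsto_norm[OF V(2)]] by simp
    have ev3: "eventually (\<lambda>n. \<epsilon> n < 1) sequentially"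
      using order_tendstoD(2)[OF eps0] by simp
    obtain N where N: "\<And>n. n \<ge> N \<Longrightarrow> norm (U n) > norm y1 / 2 \<and> norm (V n) < norm y2 + 1 \<and> \<epsilon> n < 1"
      using eventually_conj[OF ev1 eventually_conj[OF ev2 ev3]] unfolding eventually_sequentially by blast
    define B where "B = 2 * (norm y2 + 2) / norm y1"
    have TB: "norm (T n) \<le> B" if "n \<ge> N" for n
    proof -
      have "norm (T n) * norm (U n) = norm (sc (T n) (U n))" by (simp add: sc_norm)
      also have "sc (T n) (U n) = V n - (V n - sc (T n) (U n))" by simp
      also have "norm \<dots> \<le> norm (V n) + norm (V n - sc (T n) (U n))" by (rule norm_triangle_ineq4)
      also have "\<dots> \<le> norm y2 + 2" using N[OF that] est[of n] by linarith
      finally have 1: "norm (T n) * norm (U n) \<le> norm y2 + 2" .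
      have "norm (T n) * (norm y1 / 2) \<le> norm (T n) * norm (U n)"
        using N[OF that] by (intro mult_left_mono) auto
      with 1 have "norm (T n) * (norm y1 / 2) \<le> norm y2 + 2" by linarith
      then show ?thesis unfolding B_def using ny1 by (simp add: field_simps)
    qed
    define w where "w n = norm (y2 - sc (T n) y1)" for n
    have w_le: "w n \<le> norm (V n - y2) + \<epsilon> n + B * norm (U n - y1)" if "n \<ge> N" for n
    proof -
      have "y2 - sc (T n) y1 = (y2 - V n) + (V n - sc (T n) (U n)) + (sc (T n) (U n) - sc (T n) y1)"
        by simp
      hence "w n = norm ((y2 - V n) + (V n - sc (T n) (U n)) + (sc (T n) (U n) - sc (T n) y1))"
        unfolding w_def by (rule arg_cong[where f=norm])
      hence "w n \<le> norm (y2 - V n) + norm (V n - sc (T n) (U n)) + norm (sc (T n) (U n) - sc (T n) y1)"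
        using norm_triangle_ineq[of "(y2 - V n) + (V n - sc (T n) (U n))" "sc (T n) (U n) - sc (T n) y1"]
          norm_triangle_ineq[of "y2 - V n" "V n - sc (T n) (U n)"] by linarith
      also have "norm (sc (T n) (U n) - sc (T n) y1) = norm (T n) * norm (U n - y1)"
        by (simp add: sc_diff sc_norm)
      also have "\<dots> \<le> B * norm (U n - y1)" using TB[OF that] by (intro mult_right_mono) auto
      finally show ?thesis using est[of n] by (simp add: norm_minus_commute)
    qed
    have w0: "w \<longlonglongrightarrow> 0"
    proof (rule Lim_null_comparison)
      show "\<forall>\<^sub>F n in sequentially. norm (w n) \<le> norm (V n - y2) + \<epsilon> n + B * norm (U n - y1)"
        unfolding eventually_sequentially using w_le by (auto simp: w_def)
      show "(\<lambda>n. norm (V n - y2) + \<epsilon> n + B * norm (U n - y1)) \<longlonglongrightarrow> 0"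
        using tendsto_add[OF tendsto_add[OF nV eps0] tendsto_mult[OF tendsto_const[of B] nU]] by simp
    qed
    define s where "s n = T (n + N)" for n
    have "bounded (range s)" unfolding bounded_iff s_def using TB by (intro exI[of _ B]) auto
    then obtain l r where r: "strict_mono r" and lim: "(s \<circ> r) \<longlonglongrightarrow> l"
      using bounded_imp_convergent_subsequence by blast
    have w0': "(\<lambda>n. w (r n + N)) \<longlonglongrightarrow> 0"
      using LIMSEQ_subseq_LIMSEQ[OF LIMSEQ_ignore_initial_segment[OF w0, of N] r] by (simp add: o_def)
    have d0: "(\<lambda>n. w (r n + N) + norm (s (r n) - l) * norm y1) \<longlonglongrightarrow> 0"
    proof -
      have sl: "(\<lambda>n. norm (s (r n) - l)) \<longlonglongrightarrow> 0"
        using tendsto_norm[OF tendsto_diff[OF lim tendsto_const[of l]]] by (simp add: o_def)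
      show ?thesis using tendsto_add[OF w0' tendsto_mult[OF sl tendsto_const[of "norm y1"]]] by simp
    qed
    have "norm (y2 - sc l y1) \<le> w (r n + N) + norm (s (r n) - l) * norm y1" for n
    proof -
      have "y2 - sc l y1 = (y2 - sc (s (r n)) y1) + (sc (s (r n)) y1 - sc l y1)" by simp
      hence "norm (y2 - sc l y1) \<le> norm (y2 - sc (s (r n)) y1) + norm (sc (s (r n)) y1 - sc l y1)"
        using norm_triangle_ineq[of "y2 - sc (s (r n)) y1" "sc (s (r n)) y1 - sc l y1"] by simp
      also have "norm (sc (s (r n)) y1 - sc l y1) = norm (s (r n) - l) * norm y1"
        by (simp add: sc_sub sc_norm)
      finally show ?thesis unfolding w_def s_def by simp
    qed
    hence "norm (y2 - sc l y1) \<le> 0" by (intro LIMSEQ_le_const[OF d0]) auto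
    hence y2eq: "y2 = sc l y1" by simp
    obtain Q where Q0: "\<forall>n. Q n \<in> \<Phi> \<and> norm (U n) \<le> norm (Q n (U n)) + e n"
      using norming[of U] U(1) by blast
    hence Q: "\<And>n. Q n \<in> \<Phi>" "\<And>n. norm (U n) \<le> norm (Q n (U n)) + e n" by auto
    have "(\<lambda>n. norm (U n) - e n - norm (U n - y1)) \<longlonglongrightarrow> norm y1 - 0 - 0"
      by (rule tendsto_diff[OF tendsto_diff[OF tendsto_norm[OF U(2)] e0] nU])
    hence "eventually (\<lambda>n. norm (U n) - e n - norm (U n - y1) > 0) sequentially"
      using ny1 by (intro order_tendstoD(1)) auto
    then obtain n where n: "norm (U n) - e n - norm (U n - y1) > 0"
      unfolding eventually_sequentially by blast
    have "norm (Q n (U n)) \<le> norm (Q n y1) + norm (U n - y1)" by (rule lip'[OF Q(1)])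
    hence pos: "norm (Q n y1) > 0" using Q(2)[of n] n by linarith
    have "norm l * norm (Q n y1) = norm (Q n y2)" using hom[OF Q(1)] y2eq by (simp add: norm_mult)
    also have "\<dots> \<le> norm (Q n y1)" by (rule H[OF Q(1)])
    finally have "norm l \<le> 1" using pos by (simp add: mult_le_cancel_right1)
    then show ?thesis using y2eq by blast
  qed
qed



lemma sm_borel:
  assumes "strongly_measurable M f" shows "f \<in> borel_measurable M"
proof -
  obtain s where s: "\<And>n. simple_function M (s n)" "\<And>x. x \<in> space M \<Longrightarrow> (\<lambda>n. s n x) \<longlonglongrightarrow> f x"
    using assms unfolding strongly_measurable_def by blast
  show ?thesis
    by (rule borel_measurable_LIMSEQ_metric[of s]) (use s borel_measurable_simple_function in auto)
qed

lemma sm_comb: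
  assumes smf: "strongly_measurable M f" and smg: "strongly_measurable M g"
    and h: "\<And>y. isCont h y"
  shows "strongly_measurable M (\<lambda>x. f x + h (g x))"
proof -
  obtain sf where sf: "\<And>n. simple_function M (sf n)" "\<And>x. x \<in> space M \<Longrightarrow> (\<lambda>n. sf n x) \<longlonglongrightarrow> f x"
    using smf unfolding strongly_measurable_def by blast
  obtain sg where sg: "\<And>n. simple_function M (sg n)" "\<And>x. x \<in> space M \<Longrightarrow> (\<lambda>n. sg n x) \<longlonglongrightarrow> g x"
    using smg unfolding strongly_measurable_def by blast
  have "simple_function M (\<lambda>x. sf n x + h (sg n x))" for n
    by (rule simple_function_compose2[OF sf(1) simple_function_compose1[OF sg(1)]])
  moreover have "(\<lambda>n. sf n x + h (sg n x)) \<longlonglongrightarrow> f x + h (g x)" if "x \<in> space M" for x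
    by (rule tendsto_add[OF sf(2)[OF that] isCont_tendsto_compose[OF h sg(2)[OF that]]])
  ultimately show ?thesis unfolding strongly_measurable_def
    by (intro exI[of _ "\<lambda>n x. sf n x + h (sg n x)"]) auto
qed

lemma ae_repr:
  fixes sc :: "'k::{real_normed_field,heine_borel} \<Rightarrow> 'a::real_normed_vector \<Rightarrow> 'a"
    and F :: "('a \<Rightarrow> 'k) set"
  assumes sc_norm: "\<And>c x. norm (sc c x) = norm c * norm x"
    and sc_diff: "\<And>c x y. sc c x - sc c y = sc c (x - y)"
    and sc_sub: "\<And>a b x. sc a x - sc b x = sc (a - b) x"
    and lip: "\<And>\<phi> x y. \<phi>\<in>F \<Longrightarrow> norm (\<phi> x - \<phi> y) \<le> norm (x - y)"
    and hom: "\<And>\<phi> c x. \<phi>\<in>F \<Longrightarrow> \<phi> (sc c x) = c * \<phi> x"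
    and exF: "\<And>u v e. e>0 \<Longrightarrow> \<exists>\<phi>\<in>F. \<phi> u = 0 \<and> (\<exists>t. norm (v - sc t u) \<le> norm (\<phi> v) + e)"
    and smf: "strongly_measurable M f" and smg: "strongly_measurable M g"
    and hyp: "\<And>\<phi>. \<phi>\<in>F \<Longrightarrow> AE x in M. norm (\<phi> (g x)) \<le> norm (\<phi> (f x))"
  shows "AE x in M. \<exists>t. norm t \<le> 1 \<and> g x = sc t (f x)"
proof -
  obtain sf where sf: "\<And>n. simple_function M (sf n)" "\<And>x. x \<in> space M \<Longrightarrow> (\<lambda>n. sf n x) \<longlonglongrightarrow> f x"
    using smf unfolding strongly_measurable_def by blast
  obtain sg where sg: "\<And>n. simple_function M (sg n)" "\<And>x. x \<in> space M \<Longrightarrow> (\<lambda>n. sg n x) \<longlonglongrightarrow> g x"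
    using smg unfolding strongly_measurable_def by blast
  define D where "D = insert 0 (\<Union>n. sf n ` space M \<union> sg n ` space M)"
  have c1: "countable (sf n ` space M \<union> sg n ` space M)" for n
    by (intro countable_Un countable_finite simple_functionD(1)[OF sf(1)] simple_functionD(1)[OF sg(1)])
  have cD: "countable D" unfolding D_def
    by (intro countable_insert countable_UN[of UNIV] c1) simp
  define P where "P u v k \<phi> \<longleftrightarrow> \<phi>\<in>F \<and> \<phi> u = 0 \<and>
      (\<exists>t. norm (v - sc t u) \<le> norm (\<phi> v) + inverse (real (Suc k)))" for u v k \<phi>
  define pick where "pick = (\<lambda>(u,v,k::nat). SOME \<phi>. P u v k \<phi>)"
  define \<Phi> where "\<Phi> = pick ` (D \<times> D \<times> (UNIV::nat set))"
  have pick: "pick (u,v,k) \<in> F \<and> pick (u,v,k) u = 0 \<and>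
      (\<exists>t. norm (v - sc t u) \<le> norm (pick (u,v,k) v) + inverse (real (Suc k)))" for u v k
  proof -
    have "\<exists>\<phi>. P u v k \<phi>"
      using exF[of "inverse (real (Suc k))" u v] unfolding P_def by auto
    then have "P u v k (SOME \<phi>. P u v k \<phi>)" by (rule someI_ex)
    then show ?thesis unfolding pick_def P_def by simp
  qed
  have \<Phi>F: "\<Phi> \<subseteq> F" unfolding \<Phi>_def using pick by auto
  have c\<Phi>: "countable \<Phi>" unfolding \<Phi>_def
    by (intro countable_image countable_SIGMA cD) simp_all
  have ex\<Phi>: "\<exists>\<phi>\<in>\<Phi>. \<phi> u = 0 \<and> (\<exists>t. norm (v - sc t u) \<le> norm (\<phi> v) + e)"
    if "u\<in>D" "v\<in>D" "e>0" for u v e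
  proof -
    obtain k where k: "inverse (real (Suc k)) < e" using reals_Archimedean[OF \<open>e>0\<close>] by blast
    have "pick (u,v,k) \<in> \<Phi>" unfolding \<Phi>_def using that by auto
    moreover obtain t where "norm (v - sc t u) \<le> norm (pick (u,v,k) v) + inverse (real (Suc k))"
      using pick by blast
    ultimately show ?thesis using pick k by (intro bexI[of _ "pick (u,v,k)"] conjI exI[of _ t]) auto
  qed
  have lip\<Phi>: "\<And>\<phi> x y. \<phi>\<in>\<Phi> \<Longrightarrow> norm (\<phi> x - \<phi> y) \<le> norm (x - y)" using lip \<Phi>F by blast
  have hom\<Phi>: "\<And>\<phi> c x. \<phi>\<in>\<Phi> \<Longrightarrow> \<phi> (sc c x) = c * \<phi> x" using hom \<Phi>F by blast
  have D0: "0 \<in> D" unfolding D_def by simp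
  have "AE x in M. \<forall>\<phi>\<in>\<Phi>. norm (\<phi> (g x)) \<le> norm (\<phi> (f x))"
    by (subst AE_ball_countable[OF c\<Phi>]) (use hyp \<Phi>F in blast)
  then show ?thesis
  proof (rule AE_mp)
    show "AE x in M. (\<forall>\<phi>\<in>\<Phi>. norm (\<phi> (g x)) \<le> norm (\<phi> (f x))) \<longrightarrow> (\<exists>t. norm t \<le> 1 \<and> g x = sc t (f x))"
    proof (rule AE_I2, rule impI)
      fix x assume x: "x \<in> space M" and H: "\<forall>\<phi>\<in>\<Phi>. norm (\<phi> (g x)) \<le> norm (\<phi> (f x))"
      have U1: "\<And>n. sf n x \<in> D" unfolding D_def using x by blast
      have V1: "\<And>n. sg n x \<in> D" unfolding D_def using x by blast
      show "\<exists>t. norm t \<le> 1 \<and> g x = sc t (f x)"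
        by (rule pointwise[OF sc_norm sc_diff sc_sub lip\<Phi> hom\<Phi> ex\<Phi> D0 U1 sf(2)[OF x] V1 sg(2)[OF x]])
           (use H in auto)
    qed
  qed
qed

lemma real_part:
  fixes M :: "'s measure" and f g :: "'s \<Rightarrow> 'a::banach"
  assumes smf: "strongly_measurable M f" and smg: "strongly_measurable M g"
    and hyp: "\<forall>\<phi>::'a \<Rightarrow> real. bounded_linear \<phi> \<longrightarrow> (AE x in M. \<bar>\<phi> (g x)\<bar> \<le> \<bar>\<phi> (f x)\<bar>)"
  shows "\<exists>a::'s \<Rightarrow> real. a \<in> borel_measurable M \<and> (AE x in M. \<bar>a x\<bar> \<le> 1) \<and>
             (AE x in M. g x = a x *\<^sub>R f x)"
proof -
  let ?F = "{\<psi>::'a\<Rightarrow>real. bounded_linear \<psi> \<and> (\<forall>x. \<bar>\<psi> x\<bar> \<le> norm x)}"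
  have ae: "AE x in M. \<exists>t::real. norm t \<le> 1 \<and> g x = t *\<^sub>R f x"
  proof (rule ae_repr[of scaleR ?F, OF _ _ _ _ _ _ smf smg])
    show "norm (c *\<^sub>R x) = norm c * norm x" for c :: real and x :: 'a by simp
    show "c *\<^sub>R x - c *\<^sub>R y = c *\<^sub>R (x - y)" for c :: real and x y :: 'a by (simp add: scaleR_diff_right)
    show "a *\<^sub>R x - b *\<^sub>R x = (a - b) *\<^sub>R x" for a b :: real and x :: 'a by (simp add: scaleR_diff_left)
    show "norm (\<phi> x - \<phi> y) \<le> norm (x - y)" if "\<phi> \<in> ?F" for \<phi> x y
    proof -
      have "\<phi> x - \<phi> y = \<phi> (x - y)" using that linear_diff[OF bounded_linear.linear] by fastforce
      then show ?thesis using that by simp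
    qed
    show "\<phi> (c *\<^sub>R x) = c * \<phi> x" if "\<phi> \<in> ?F" for \<phi> c x
      using that linear_scale[OF bounded_linear.linear, of \<phi> c x] by simp
    show "\<exists>\<phi>\<in>?F. \<phi> u = 0 \<and> (\<exists>t. norm (v - t *\<^sub>R u) \<le> norm (\<phi> v) + e)" if e: "e > 0" for u v e
    proof -
      obtain \<psi> where \<psi>: "bounded_linear \<psi>" "\<forall>x. \<bar>\<psi> x\<bar> \<le> norm x" "\<psi> u = 0"
        "\<exists>t. norm (v - t *\<^sub>R u) \<le> \<bar>\<psi> v\<bar> + e"
        using real_fun[OF e, of u v] by blast
      show ?thesis by (rule bexI[of _ \<psi>]) (use \<psi> in auto)
    qed
    show "AE x in M. norm (\<phi> (g x)) \<le> norm (\<phi> (f x))" if "\<phi> \<in> ?F" for \<phi>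
      using hyp that by simp
  qed
  define a where "a x = (if norm (f x) = 0 then 0 else (norm (f x + g x) - norm (f x)) / norm (f x))" for x
  have sm1: "strongly_measurable M (\<lambda>x. f x + g x)" using sm_comb[OF smf smg continuous_ident] by simp
  have [measurable]: "(\<lambda>x. norm (f x)) \<in> borel_measurable M"
    by (rule measurable_compose[OF sm_borel[OF smf] borel_measurable_norm])
  have [measurable]: "(\<lambda>x. norm (f x + g x)) \<in> borel_measurable M"
    by (rule measurable_compose[OF sm_borel[OF sm1] borel_measurable_norm])
  have meas: "a \<in> borel_measurable M" unfolding a_def by measurable
  have "AE x in M. \<bar>a x\<bar> \<le> 1 \<and> g x = a x *\<^sub>R f x" using ae
  proof (rule eventually_mono)
    fix x assume "\<exists>t::real. norm t \<le> 1 \<and> g x = t *\<^sub>R f x"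
    then obtain t where t: "\<bar>t\<bar> \<le> 1" "g x = t *\<^sub>R f x" by auto
    show "\<bar>a x\<bar> \<le> 1 \<and> g x = a x *\<^sub>R f x"
    proof (cases "f x = 0")
      case True then show ?thesis using t unfolding a_def by simp
    next
      case False
      have "f x + g x = (1 + t) *\<^sub>R f x" using t by (simp add: algebra_simps)
      moreover have "\<bar>1 + t\<bar> = 1 + t" using t by linarith
      ultimately have "norm (f x + g x) = (1 + t) * norm (f x)" by simp
      hence "a x = t" unfolding a_def using False by (simp add: field_simps)
      then show ?thesis using t by simp
    qed
  qed
  then have "AE x in M. \<bar>a x\<bar> \<le> 1" "AE x in M. g x = a x *\<^sub>R f x"
    by (auto elim: eventually_mono)
  then show ?thesis using meas by blast
qed

lemma complex_part:
  fixes cs :: "complex \<Rightarrow> 'b::banach \<Rightarrow> 'b" and M :: "'t measure" and f g :: "'t \<Rightarrow> 'b"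
  assumes cs: "complex_scaling cs"
    and smf: "strongly_measurable M f" and smg: "strongly_measurable M g"
    and hyp: "\<forall>\<phi>. complex_dual cs \<phi> \<longrightarrow> (AE x in M. cmod (\<phi> (g x)) \<le> cmod (\<phi> (f x)))"
  shows "\<exists>a::'t \<Rightarrow> complex. a \<in> borel_measurable M \<and> (AE x in M. cmod (a x) \<le> 1) \<and>
             (AE x in M. g x = cs (a x) (f x))"
proof -
  let ?F = "{\<phi>::'b \<Rightarrow> complex. complex_dual cs \<phi> \<and> (\<forall>x. cmod (\<phi> x) \<le> norm x)}"
  have ae: "AE x in M. \<exists>t::complex. norm t \<le> 1 \<and> g x = cs t (f x)"
  proof (rule ae_repr[of cs ?F, OF _ _ _ _ _ _ smf smg])
    show "norm (cs c x) = norm c * norm x" for c x by (simp add: cs_norm[OF cs])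
    show "cs c x - cs c y = cs c (x - y)" for c x y by (simp add: cs_diffr[OF cs])
    show "cs a x - cs b x = cs (a - b) x" for a b x by (simp add: cs_diffl[OF cs])
    show "norm (\<phi> x - \<phi> y) \<le> norm (x - y)" if F: "\<phi> \<in> ?F" for \<phi> x y
    proof -
      have bl: "bounded_linear \<phi>" using F unfolding complex_dual_def by blast
      have "\<phi> x - \<phi> y = \<phi> (x - y)" using linear_diff[OF bounded_linear.linear[OF bl]] by simp
      then show ?thesis using F by simp
    qed
    show "\<phi> (cs c x) = c * \<phi> x" if F: "\<phi> \<in> ?F" for \<phi> c x
      using F unfolding complex_dual_def by blast
    show "\<exists>\<phi>\<in>?F. \<phi> u = 0 \<and> (\<exists>t. norm (v - cs t u) \<le> norm (\<phi> v) + e)" if e: "e > 0" for u v e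
    proof -
      obtain \<phi> where \<phi>: "complex_dual cs \<phi>" "\<forall>x. cmod (\<phi> x) \<le> norm x" "\<phi> u = 0"
        "\<exists>t. norm (v - cs t u) \<le> cmod (\<phi> v) + e"
        using complex_fun[OF cs e, of u v] by blast
      show ?thesis by (rule bexI[of _ \<phi>]) (use \<phi> in auto)
    qed
    show "AE x in M. norm (\<phi> (g x)) \<le> norm (\<phi> (f x))" if F: "\<phi> \<in> ?F" for \<phi>
      using hyp F by simp
  qed
  have bli: "bounded_linear (cs \<i>)"
    by (rule bounded_linear_intro[where K=1]) (simp_all add: cs_addr[OF cs] cs_scaleR[OF cs] cs_norm[OF cs])
  have sm1: "strongly_measurable M (\<lambda>x. f x + g x)" using sm_comb[OF smf smg continuous_ident] by simp
  have sm2: "strongly_measurable M (\<lambda>x. f x + cs \<i> (g x))"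
    by (rule sm_comb[OF smf smg linear_continuous_at[OF bli]])
  have [measurable]: "(\<lambda>x. norm (f x)) \<in> borel_measurable M"
    by (rule measurable_compose[OF sm_borel[OF smf] borel_measurable_norm])
  have [measurable]: "(\<lambda>x. norm (g x)) \<in> borel_measurable M"
    by (rule measurable_compose[OF sm_borel[OF smg] borel_measurable_norm])
  have [measurable]: "(\<lambda>x. norm (f x + g x)) \<in> borel_measurable M"
    by (rule measurable_compose[OF sm_borel[OF sm1] borel_measurable_norm])
  have [measurable]: "(\<lambda>x. norm (f x + cs \<i> (g x))) \<in> borel_measurable M"
    by (rule measurable_compose[OF sm_borel[OF sm2] borel_measurable_norm])
  define A where "A x = (if norm (f x) = 0 then 0 else
     ((norm (f x + g x) / norm (f x))^2 - 1 - (norm (g x) / norm (f x))^2) / 2)" for x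
  define B where "B x = (if norm (f x) = 0 then 0 else
     (1 + (norm (g x) / norm (f x))^2 - (norm (f x + cs \<i> (g x)) / norm (f x))^2) / 2)" for x
  define a where "a x = Complex (A x) (B x)" for x
  have [measurable]: "A \<in> borel_measurable M" unfolding A_def by measurable
  have [measurable]: "B \<in> borel_measurable M" unfolding B_def by measurable
  have meas: "a \<in> borel_measurable M" unfolding borel_measurable_complex_iff a_def by simp
  have "AE x in M. cmod (a x) \<le> 1 \<and> g x = cs (a x) (f x)" using ae
  proof (rule eventually_mono)
    fix x assume "\<exists>t::complex. norm t \<le> 1 \<and> g x = cs t (f x)"
    then obtain t where t: "cmod t \<le> 1" "g x = cs t (f x)" by auto
    show "cmod (a x) \<le> 1 \<and> g x = cs (a x) (f x)"
    proof (cases "f x = 0")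
      case True
      have "a x = 0" unfolding a_def A_def B_def using True by (simp add: complex_eq_iff)
      then show ?thesis using t True by (simp add: cs_zero[OF cs] cs_zero_left[OF cs])
    next
      case False
      define n where "n = norm (f x)"
      have n: "n > 0" "n \<noteq> 0" using False n_def by auto
      have "f x + g x = cs (1 + t) (f x)" using t by (simp add: cs_addl[OF cs] cs_one[OF cs])
      hence r1: "norm (f x + g x) / n = cmod (1 + t)" using n n_def by (simp add: cs_norm[OF cs])
      have r2: "norm (g x) / n = cmod t" using t n n_def by (simp add: cs_norm[OF cs])
      have "f x + cs \<i> (g x) = cs (1 + \<i> * t) (f x)"
        using t by (simp add: cs_addl[OF cs] cs_one[OF cs] cs_mult[OF cs])
      hence r3: "norm (f x + cs \<i> (g x)) / n = cmod (1 + \<i> * t)" using n n_def by (simp add: cs_norm[OF cs])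
      have "A x = ((cmod (1 + t))^2 - 1 - (cmod t)^2) / 2"
        unfolding A_def using n n_def r1 r2 by simp
      also have "\<dots> = Re t" by (simp only: cmod_power2) (simp add: power2_eq_square algebra_simps)
      finally have RA: "A x = Re t" .
      have "B x = (1 + (cmod t)^2 - (cmod (1 + \<i> * t))^2) / 2"
        unfolding B_def using n n_def r2 r3 by simp
      also have "\<dots> = Im t" by (simp only: cmod_power2) (simp add: power2_eq_square algebra_simps)
      finally have RB: "B x = Im t" .
      have "a x = t" unfolding a_def RA RB by (simp add: complex_eq_iff)
      then show ?thesis using t by simp
    qed
  qed
  then have "AE x in M. cmod (a x) \<le> 1" "AE x in M. g x = cs (a x) (f x)"
    by (auto elim: eventually_mono)
  then show ?thesis using meas by blast
qed


theorem mainTheorem3: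
  shows
  "(\<forall>(M::'s measure) (f::'s \<Rightarrow> 'a::banach) g.
      strongly_measurable M f \<and> strongly_measurable M g \<and>
      (\<forall>\<phi>::'a \<Rightarrow> real. bounded_linear \<phi> \<longrightarrow>
         (AE x in M. \<bar>\<phi> (g x)\<bar> \<le> \<bar>\<phi> (f x)\<bar>))
      \<longrightarrow> (\<exists>a::'s \<Rightarrow> real. a \<in> borel_measurable M \<and> (AE x in M. \<bar>a x\<bar> \<le> 1) \<and>
             (AE x in M. g x = a x *\<^sub>R f x)))
   \<and>
   (\<forall>(cs::complex \<Rightarrow> 'b::banach \<Rightarrow> 'b) (M::'t measure) (f::'t \<Rightarrow> 'b) g.
      complex_scaling cs \<and>
      strongly_measurable M f \<and> strongly_measurable M g \<and>
      (\<forall>\<phi>. complex_dual cs \<phi> \<longrightarrow>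
         (AE x in M. cmod (\<phi> (g x)) \<le> cmod (\<phi> (f x))))
      \<longrightarrow> (\<exists>a::'t \<Rightarrow> complex. a \<in> borel_measurable M \<and> (AE x in M. cmod (a x) \<le> 1) \<and>
             (AE x in M. g x = cs (a x) (f x))))"
proof (intro conjI allI impI)
  fix M :: "'s measure" and f g :: "'s \<Rightarrow> 'a"
  assume h: "strongly_measurable M f \<and> strongly_measurable M g \<and>
      (\<forall>\<phi>::'a \<Rightarrow> real. bounded_linear \<phi> \<longrightarrow> (AE x in M. \<bar>\<phi> (g x)\<bar> \<le> \<bar>\<phi> (f x)\<bar>))"
  then show "\<exists>a::'s \<Rightarrow> real. a \<in> borel_measurable M \<and> (AE x in M. \<bar>a x\<bar> \<le> 1) \<and>
             (AE x in M. g x = a x *\<^sub>R f x)"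
    using real_part[of M f g] by blast
next
  fix cs :: "complex \<Rightarrow> 'b \<Rightarrow> 'b" and M :: "'t measure" and f g :: "'t \<Rightarrow> 'b"
  assume h: "complex_scaling cs \<and> strongly_measurable M f \<and> strongly_measurable M g \<and>
      (\<forall>\<phi>. complex_dual cs \<phi> \<longrightarrow> (AE x in M. cmod (\<phi> (g x)) \<le> cmod (\<phi> (f x))))"
  then show "\<exists>a::'t \<Rightarrow> complex. a \<in> borel_measurable M \<and> (AE x in M. cmod (a x) \<le> 1) \<and>
             (AE x in M. g x = cs (a x) (f x))"
    using complex_part[of cs M f g] by blast
qed

end
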